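(* Let $(x,y)$ be an $\mathbf{x}$-vertex of $R$ and let $x'$ be a vertex of $P_A$ adjacent to $x$ in $P_A$. Then the step from $x$ to $x'$ lifts to $R$ (i.e., there exists $y'$ with $(x',y')\in R$ and $\operatorname{supp}(y')=\operatorname{supp}(y)$) if and only if $ax'\in\operatorname{Band}_{\mathbf{x}}(y)$.
   Context: Let $A\in\mathbb{R}^{m_1\times n_1}$, nonzero $a\in\mathbb{R}^{1\times n_1}$, nonzero $b\in\mathbb{R}^{1\times n_2}$, $B\in\mathbb{R}^{m_2\times n_2}$, $c_A\in\mathbb{R}^{m_1}$, $c_B\in\mathbb{R}^{m_2}$, $c_a,c_b\in\mathbb{R}$, and $R=\{(x,y)\in\mathbb{R}^{n_1}\times\mathbb{R}^{n_2}: Ax=c_A,\ ax+by=c_a+c_b,\ By=c_B,\ x,y\ge 0\}$. Assume $R$ is simple (nondegenerate). Let $P_A=\{x: Ax=c_A, x\ge 0\}$ and $Q_B=\{y: By=c_B, y\ge 0\}$. A vertex $(x,y)$ of $R$ is an $\mathbf{x}$-vertex if $x$ is a vertex of $P_A$. For such a vertex, $\operatorname{Band}_{\mathbf{x}}(y):=\{c_a+c_b-bz : Bz=c_B,\ \operatorname{supp}(z)\subseteq\operatorname{supp}(y),\ z\ge 0\}\subseteq\mathbb{R}$, where $\operatorname{supp}$ denotes the set of indices of nonzero coordinates. *)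

theory Defs
  imports "HOL-Analysis.Analysis"
begin

text \<open>Vectors in R^n are modelled as real^'n; a row vector a is a vector and ax is a \<bullet> x.\<close>

definition supp :: "real^'n \<Rightarrow> 'n set" where
  "supp x = {i. x $ i \<noteq> 0}"

definition nonneg :: "real^'n \<Rightarrow> bool" where
  "nonneg x \<longleftrightarrow> (\<forall>i. 0 \<le> x $ i)"

definition std_poly :: "real^'n^'m \<Rightarrow> real^'m \<Rightarrow> (real^'n) set" where
  "std_poly A c = {x. A *v x = c \<and> nonneg x}"

definition R_set :: "real^'n1^'m1 \<Rightarrow> real^'n1 \<Rightarrow> real^'n2 \<Rightarrow> real^'n2^'m2
      \<Rightarrow> real^'m1 \<Rightarrow> real^'m2 \<Rightarrow> real \<Rightarrow> real \<Rightarrow> ((real^'n1) \<times> (real^'n2)) set" where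
  "R_set A a b B cA cB ca cb =
     {(x, y). A *v x = cA \<and> a \<bullet> x + b \<bullet> y = ca + cb \<and> B *v y = cB \<and> nonneg x \<and> nonneg y}"

definition R_rank :: "real^'n1^'m1 \<Rightarrow> real^'n1 \<Rightarrow> real^'n2 \<Rightarrow> real^'n2^'m2 \<Rightarrow> nat" where
  "R_rank A a b B = CARD('n1) + CARD('n2) -
     dim {(u, v). A *v u = 0 \<and> a \<bullet> u + b \<bullet> v = 0 \<and> B *v v = (0::real^'m2)}"

text \<open>R is simple (nondegenerate): every vertex (basic feasible solution) of R has exactly
  rank-many nonzero coordinates.\<close>
definition R_nondegenerate :: "real^'n1^'m1 \<Rightarrow> real^'n1 \<Rightarrow> real^'n2 \<Rightarrow> real^'n2^'m2
      \<Rightarrow> real^'m1 \<Rightarrow> real^'m2 \<Rightarrow> real \<Rightarrow> real \<Rightarrow> bool" where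
  "R_nondegenerate A a b B cA cB ca cb \<longleftrightarrow>
     (\<forall>x y. (x, y) extreme_point_of R_set A a b B cA cB ca cb \<longrightarrow>
        card (supp x) + card (supp y) = R_rank A a b B)"

definition adjacent_vertices :: "'a::euclidean_space set \<Rightarrow> 'a \<Rightarrow> 'a \<Rightarrow> bool" where
  "adjacent_vertices P v w \<longleftrightarrow>
     v extreme_point_of P \<and> w extreme_point_of P \<and> v \<noteq> w \<and>
     (\<exists>e. e face_of P \<and> aff_dim e = 1 \<and> v \<in> e \<and> w \<in> e)"

definition Band :: "real^'n2 \<Rightarrow> real^'n2^'m2 \<Rightarrow> real^'m2 \<Rightarrow> real \<Rightarrow> real \<Rightarrow> real^'n2 \<Rightarrow> real set" where
  "Band b B cB ca cb y = {ca + cb - b \<bullet> z | z. B *v z = cB \<and> supp z \<subseteq> supp y \<and> nonneg z}"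

end

theory Submission
  imports Defs
begin

lemma pert:
  fixes p u :: "real^'n"
  assumes "nonneg p" "supp u \<subseteq> supp p"
  shows "\<exists>e>0. \<forall>t. \<bar>t\<bar> \<le> e \<longrightarrow> nonneg (p + t *\<^sub>R u)"
proof (cases "supp p = {}")
  case True
  then have "u = 0" using assms(2) by (auto simp: supp_def vec_eq_iff)
  then show ?thesis using assms(1) by (intro exI[of _ 1]) auto
next
  case False
  define m where "m = Min ((\<lambda>i. p $ i) ` supp p)"
  have fin: "finite (supp p)" by simp
  have mpos: "m > 0" unfolding m_def using False fin assms(1)
    by (subst Min_gr_iff) (auto simp: supp_def nonneg_def less_le)
  have mle: "m \<le> p $ i" if "i \<in> supp p" for i unfolding m_def using that fin by auto
  define e where "e = m / (norm u + 1)"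
  have epos: "e > 0" unfolding e_def using mpos by (simp add: add_nonneg_pos)
  show ?thesis
  proof (intro exI[of _ e] conjI epos allI impI)
    fix t :: real assume t: "\<bar>t\<bar> \<le> e"
    show "nonneg (p + t *\<^sub>R u)" unfolding nonneg_def
    proof
      fix i
      show "0 \<le> (p + t *\<^sub>R u) $ i"
      proof (cases "i \<in> supp u")
        case False then show ?thesis using assms(1) by (auto simp: supp_def nonneg_def)
      next
        case True
        then have ip: "i \<in> supp p" using assms(2) by auto
        have "\<bar>u $ i\<bar> \<le> norm u" by (rule component_le_norm_cart)
        have "\<bar>t * u $ i\<bar> \<le> e * norm u"
          using t \<open>\<bar>u $ i\<bar> \<le> norm u\<close> by (simp add: abs_mult mult_mono)
        also have "\<dots> = m * (norm u / (norm u + 1))" unfolding e_def by simp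
        also have "\<dots> \<le> m" using mpos
          by (intro mult_left_le) (auto simp: divide_le_eq, smt (verit) norm_ge_zero)
        finally show ?thesis using mle[OF ip] by auto
      qed
    qed
  qed
qed

lemma L1:
  fixes A :: "real^'n^'m" and x u :: "real^'n"
  assumes ext: "x extreme_point_of std_poly A c" and Au: "A *v u = 0" and su: "supp u \<subseteq> supp x"
  shows "u = 0"
proof (rule ccontr)
  assume un: "u \<noteq> 0"
  have xP: "x \<in> std_poly A c" using ext by (simp add: extreme_point_of_def)
  then have nx: "nonneg x" and Ax: "A *v x = c" by (auto simp: std_poly_def)
  obtain e where e: "e > 0" "\<And>t. \<bar>t\<bar> \<le> e \<Longrightarrow> nonneg (x + t *\<^sub>R u)"
    using pert[OF nx su] by blast
  define p where "p = x + e *\<^sub>R u"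
  define q where "q = x + (- e) *\<^sub>R u"
  have pP: "p \<in> std_poly A c" unfolding p_def std_poly_def using e(2)[of e] e(1) Ax Au
    by (simp add: matrix_vector_right_distrib matrix_vector_mult_diff_distrib matrix_vector_mult_scaleR)
  have qP: "q \<in> std_poly A c" unfolding q_def std_poly_def using e(2)[of "-e"] e(1) Ax Au
    by (simp add: matrix_vector_right_distrib matrix_vector_mult_diff_distrib matrix_vector_mult_scaleR)
  have pq: "p \<noteq> q"
  proof
    assume "p = q"
    then have "e *\<^sub>R u = (-e) *\<^sub>R u" unfolding p_def q_def by simp
    then show False using e un by (simp only: scaleR_cancel_right) auto
  qed
  have "p + q = 2 *\<^sub>R x" unfolding p_def q_def by (simp add: scaleR_2)
  then have "x = midpoint p q" unfolding midpoint_def by simp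
  then have "x \<in> open_segment p q" using pq by simp
  then show False using ext pP qP by (auto simp: extreme_point_of_def)
qed

lemma L2:
  assumes ext: "(x, y) extreme_point_of R_set A a b B cA cB ca cb"
    and Au: "A *v u = 0" and ab: "a \<bullet> u + b \<bullet> v = 0" and Bv: "B *v v = 0"
    and su: "supp u \<subseteq> supp x" and sv: "supp v \<subseteq> supp y"
  shows "u = 0 \<and> v = 0"
proof (rule ccontr)
  assume un: "\<not> (u = 0 \<and> v = 0)"
  have xP: "(x, y) \<in> R_set A a b B cA cB ca cb" using ext by (simp add: extreme_point_of_def)
  then have nx: "nonneg x" and ny: "nonneg y" and Ax: "A *v x = cA" and By: "B *v y = cB"
    and xy: "a \<bullet> x + b \<bullet> y = ca + cb" by (auto simp: R_set_def)
  obtain e1 where e1: "e1 > 0" "\<And>t. \<bar>t\<bar> \<le> e1 \<Longrightarrow> nonneg (x + t *\<^sub>R u)"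
    using pert[OF nx su] by blast
  obtain e2 where e2: "e2 > 0" "\<And>t. \<bar>t\<bar> \<le> e2 \<Longrightarrow> nonneg (y + t *\<^sub>R v)"
    using pert[OF ny sv] by blast
  define e where "e = min e1 e2"
  have e: "e > 0" "\<bar>e\<bar> \<le> e1" "\<bar>e\<bar> \<le> e2" "\<bar>-e\<bar> \<le> e1" "\<bar>-e\<bar> \<le> e2"
    using e1 e2 by (auto simp: e_def)
  define p where "p = (x + e *\<^sub>R u, y + e *\<^sub>R v)"
  define q where "q = (x + (- e) *\<^sub>R u, y + (-e) *\<^sub>R v)"
  have eq1: "a \<bullet> (x + t *\<^sub>R u) + b \<bullet> (y + t *\<^sub>R v) = ca + cb" for t
  proof -
    have "a \<bullet> (x + t *\<^sub>R u) + b \<bullet> (y + t *\<^sub>R v) = (a \<bullet> x + b \<bullet> y) + t * (a \<bullet> u + b \<bullet> v)"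
      by (simp add: inner_add_right algebra_simps)
    then show ?thesis using xy ab by simp
  qed
  have pP: "p \<in> R_set A a b B cA cB ca cb" unfolding p_def R_set_def
    using e e1(2)[of e] e2(2)[of e] Ax Au By Bv eq1[of e]
    by (simp add: matrix_vector_right_distrib matrix_vector_mult_diff_distrib matrix_vector_mult_scaleR)
  have qP: "q \<in> R_set A a b B cA cB ca cb" unfolding q_def R_set_def
    using e e1(2)[of "-e"] e2(2)[of "-e"] Ax Au By Bv eq1[of "-e"]
    by (simp add: matrix_vector_right_distrib matrix_vector_mult_diff_distrib matrix_vector_mult_scaleR)
  have pq: "p \<noteq> q"
  proof
    assume "p = q"
    then have "e *\<^sub>R u = (-e) *\<^sub>R u" "e *\<^sub>R v = (-e) *\<^sub>R v" unfolding p_def q_def by simp_all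
    then show False using e un by (simp only: scaleR_cancel_right) auto
  qed
  have "p + q = 2 *\<^sub>R (x, y)" unfolding p_def q_def by (simp add: scaleR_2)
  then have "(x, y) = midpoint p q" unfolding midpoint_def by simp
  then have "(x, y) \<in> open_segment p q" using pq by simp
  then show False using ext pP qP by (auto simp: extreme_point_of_def)
qed

lemma supp_seg:
  fixes p q :: "real^'n"
  assumes "nonneg p" "nonneg q" "0 < t" "t < 1"
  shows "supp (q - p) \<subseteq> supp ((1 - t) *\<^sub>R p + t *\<^sub>R q)"
proof
  fix i assume i: "i \<in> supp (q - p)"
  show "i \<in> supp ((1 - t) *\<^sub>R p + t *\<^sub>R q)"
  proof (rule ccontr)
    assume "i \<notin> supp ((1 - t) *\<^sub>R p + t *\<^sub>R q)"
    then have h: "(1 - t) * p $ i + t * q $ i = 0" by (simp add: supp_def)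
    have "0 \<le> p $ i" "0 \<le> q $ i" using assms by (auto simp: nonneg_def)
    then have "(1 - t) * p $ i \<ge> 0" "t * q $ i \<ge> 0" using assms by auto
    then have "(1 - t) * p $ i = 0" "t * q $ i = 0" using h by linarith+
    then have "p $ i = 0" "q $ i = 0" using assms by auto
    then show False using i by (simp add: supp_def)
  qed
qed

lemma L3:
  assumes mem: "(x, y) \<in> R_set A a b B cA cB ca cb"
    and ker: "\<And>u v. A *v u = 0 \<Longrightarrow> a \<bullet> u + b \<bullet> v = 0 \<Longrightarrow> B *v v = 0
       \<Longrightarrow> supp u \<subseteq> supp x \<Longrightarrow> supp v \<subseteq> supp y \<Longrightarrow> u = 0 \<and> v = 0"
  shows "(x, y) extreme_point_of R_set A a b B cA cB ca cb"
  unfolding extreme_point_of_def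
proof (intro conjI mem ballI notI)
  fix p q assume pR: "p \<in> R_set A a b B cA cB ca cb" and qR: "q \<in> R_set A a b B cA cB ca cb"
    and seg: "(x, y) \<in> open_segment p q"
  obtain t where pq: "p \<noteq> q" and t: "0 < t" "t < 1" and xy: "(x, y) = (1 - t) *\<^sub>R p + t *\<^sub>R q"
    using seg by (auto simp: in_segment)
  obtain p1 p2 where pp: "p = (p1, p2)" by fastforce
  obtain q1 q2 where qq: "q = (q1, q2)" by fastforce
  have P: "A *v p1 = cA" "a \<bullet> p1 + b \<bullet> p2 = ca + cb" "B *v p2 = cB" "nonneg p1" "nonneg p2"
    using pR pp by (auto simp: R_set_def)
  have Q: "A *v q1 = cA" "a \<bullet> q1 + b \<bullet> q2 = ca + cb" "B *v q2 = cB" "nonneg q1" "nonneg q2"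
    using qR qq by (auto simp: R_set_def)
  have x: "x = (1 - t) *\<^sub>R p1 + t *\<^sub>R q1" and y: "y = (1 - t) *\<^sub>R p2 + t *\<^sub>R q2"
    using xy pp qq by auto
  have "q1 - p1 = 0 \<and> q2 - p2 = 0"
  proof (rule ker)
    show "A *v (q1 - p1) = 0" using P Q by (simp add: algebra_simps)
    show "B *v (q2 - p2) = 0" using P Q by (simp add: algebra_simps)
    show "a \<bullet> (q1 - p1) + b \<bullet> (q2 - p2) = 0" using P Q by (simp add: inner_diff_right)
    show "supp (q1 - p1) \<subseteq> supp x" unfolding x by (rule supp_seg) (use P Q t in auto)
    show "supp (q2 - p2) \<subseteq> supp y" unfolding y by (rule supp_seg) (use P Q t in auto)
  qed
  then show False using pq pp qq by auto
qed

lemma supp_axis: "supp (axis i (1::real)) = {i}"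
  by (auto simp: supp_def axis_def)

lemma dimE:
  fixes S :: "'n1::finite set" and T :: "'n2::finite set"
  shows "card S + card T \<le> dim {(s::real^'n1, t::real^'n2). supp s \<subseteq> S \<and> supp t \<subseteq> T}"
proof -
  define BE where "BE = (\<lambda>i. (axis i (1::real), 0::real^'n2)) ` S \<union> (\<lambda>j. (0::real^'n1, axis j (1::real))) ` T"
  have sub: "BE \<subseteq> Basis" unfolding BE_def Basis_prod_def by auto
  have ind: "independent BE" using independent_mono[OF independent_Basis sub] .
  have inE: "BE \<subseteq> {(s::real^'n1, t::real^'n2). supp s \<subseteq> S \<and> supp t \<subseteq> T}"
    unfolding BE_def by (auto simp: supp_def axis_def split: if_splits)
  have c1: "card ((\<lambda>i. (axis i (1::real), 0::real^'n2)) ` S) = card S"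
    by (rule card_image) (auto simp: inj_on_def axis_eq_axis)
  have c2: "card ((\<lambda>j. (0::real^'n1, axis j (1::real))) ` T) = card T"
    by (rule card_image) (auto simp: inj_on_def axis_eq_axis)
  have "card BE = card S + card T" unfolding BE_def
    by (subst card_Un_disjoint) (auto simp: c1 c2 axis_eq_0_iff)
  then show ?thesis using independent_card_le_dim[OF inE ind] by simp
qed

theorem lemma1:
  fixes A :: "real^'n1^'m1" and a :: "real^'n1" and b :: "real^'n2" and B :: "real^'n2^'m2"
    and cA :: "real^'m1" and cB :: "real^'m2" and ca cb :: real
    and x x' :: "real^'n1" and y :: "real^'n2"
  assumes a_nz: "a \<noteq> 0" and b_nz: "b \<noteq> 0"
    and simple: "R_nondegenerate A a b B cA cB ca cb"
    and vert: "(x, y) extreme_point_of R_set A a b B cA cB ca cb"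
    and xvert: "x extreme_point_of std_poly A cA"
    and adj: "adjacent_vertices (std_poly A cA) x x'"
  shows "(\<exists>y'. (x', y') \<in> R_set A a b B cA cB ca cb \<and> supp y' = supp y)
           \<longleftrightarrow> a \<bullet> x' \<in> Band b B cB ca cb y"
proof
  assume "\<exists>y'. (x', y') \<in> R_set A a b B cA cB ca cb \<and> supp y' = supp y"
  then obtain y' where "(x', y') \<in> R_set A a b B cA cB ca cb" "supp y' = supp y" by blast
  then show "a \<bullet> x' \<in> Band b B cB ca cb y"
    unfolding Band_def R_set_def by (auto intro!: exI[of _ y'])
next
  assume "a \<bullet> x' \<in> Band b B cB ca cb y"
  then obtain z where Bz: "B *v z = cB" and szy: "supp z \<subseteq> supp y" and nz: "nonneg z"
    and az: "a \<bullet> x' = ca + cb - b \<bullet> z"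
    unfolding Band_def by blast
  have x'ext: "x' extreme_point_of std_poly A cA" using adj by (simp add: adjacent_vertices_def)
  then have x'P: "x' \<in> std_poly A cA" by (simp add: extreme_point_of_def)
  have zR: "(x', z) \<in> R_set A a b B cA cB ca cb"
    using x'P Bz nz az by (auto simp: R_set_def std_poly_def)
  have xyR: "(x, y) \<in> R_set A a b B cA cB ca cb" using vert by (simp add: extreme_point_of_def)
  then have By: "B *v y = cB" and ny: "nonneg y" by (auto simp: R_set_def)
  show "\<exists>y'. (x', y') \<in> R_set A a b B cA cB ca cb \<and> supp y' = supp y"
  proof (cases "supp z = supp y")
    case True then show ?thesis using zR by blast
  next
    case False
    then obtain i where iy: "i \<in> supp y" and iz: "i \<notin> supp z" using szy by blast
    define d where "d = y - z"
    have Bd: "B *v d = 0" using By Bz by (simp add: d_def matrix_vector_mult_diff_distrib)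
    have sd: "supp d \<subseteq> supp y" using szy by (auto simp: d_def supp_def)
    have di: "d $ i \<noteq> 0" using iy iz by (simp add: d_def supp_def)
    have kerv: "v = 0" if "B *v v = 0" "b \<bullet> v = 0" "supp v \<subseteq> supp y" for v
      using L2[OF vert, of 0 v] that by (simp add: supp_def)
    have ker: "u = 0 \<and> v = 0" if "A *v u = 0" "a \<bullet> u + b \<bullet> v = 0" "B *v v = 0"
      "supp u \<subseteq> supp x'" "supp v \<subseteq> supp z" for u v
    proof -
      have "u = 0" using L1[OF x'ext that(1) that(4)] .
      then show ?thesis using kerv[of v] that szy by auto
    qed
    have zext: "(x', z) extreme_point_of R_set A a b B cA cB ca cb"
      by (rule L3[OF zR ker])
    have cnt: "card (supp x') + card (supp z) = R_rank A a b B"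
      using simple zext by (simp add: R_nondegenerate_def)
    define N where "N = {(u, v). A *v u = 0 \<and> a \<bullet> u + b \<bullet> v = 0 \<and> B *v v = (0::real^'m2)}"
    define E where "E = {(s::real^'n1, t::real^'n2). supp s \<subseteq> supp x' \<and> supp t \<subseteq> supp z}"
    have subN: "subspace N" unfolding subspace_def N_def
      by (auto simp: zero_prod_def matrix_vector_right_distrib matrix_vector_mult_scaleR inner_add_right)
        (metis distrib_left mult_zero_right)
    have supp_add: "supp (p + q) \<subseteq> supp p \<union> supp q" for p q :: "real^'k"
      by (auto simp: supp_def)
    have supp_scale: "supp (c *\<^sub>R p) \<subseteq> supp p" for c and p :: "real^'k"
      by (auto simp: supp_def)
    have subE: "subspace E" unfolding subspace_def E_def
      by (auto simp: zero_prod_def supp_def subset_iff) (metis add.right_neutral)+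
    have NE: "N \<inter> E = {0}"
    proof
      show "N \<inter> E \<subseteq> {0}"
      proof
        fix w assume w: "w \<in> N \<inter> E"
        obtain u v where uv: "w = (u, v)" by fastforce
        show "w \<in> {0}" using ker[of u v] w uv by (auto simp: N_def E_def zero_prod_def)
      qed
      show "{0} \<subseteq> N \<inter> E" using subN subE by (simp add: subspace_0)
    qed
    define NpE where "NpE = {p + q |p q. p \<in> N \<and> q \<in> E}"
    have dsum: "dim NpE = dim N + dim E"
      using dim_sums_Int[OF subN subE] NE unfolding NpE_def by simp
    have subNE: "subspace NpE" unfolding NpE_def by (rule subspace_sums[OF subN subE])
    have notin: "(0, d) \<notin> span NpE"
    proof
      assume "(0, d) \<in> span NpE"
      then have "(0, d) \<in> NpE" using span_eq_iff subNE by blast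
      then obtain p q where pN: "p \<in> N" and qE: "q \<in> E" and pq: "(0, d) = p + q"
        unfolding NpE_def by blast
      obtain u v where p: "p = (u, v)" by fastforce
      obtain s t where q: "q = (s, t)" by fastforce
      have e1: "u + s = 0" "v + t = d" using pq p q by auto
      have us: "u = - s" using e1(1) by (metis add.commute minus_unique)
      have vt: "v = d - t" using e1(2) by (metis add_diff_cancel_right')
      have Au: "A *v u = 0" and abv: "a \<bullet> u + b \<bullet> v = 0" and Bv: "B *v v = 0"
        using pN p by (auto simp: N_def)
      have ss: "supp s \<subseteq> supp x'" and st: "supp t \<subseteq> supp z" using qE q by (auto simp: E_def)
      have "supp u \<subseteq> supp x'" using ss us by (auto simp: supp_def)
      then have u0: "u = 0" using L1[OF x'ext Au] by simp
      have "supp v \<subseteq> supp y"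
      proof
        fix j assume "j \<in> supp v"
        then have "d $ j \<noteq> 0 \<or> t $ j \<noteq> 0" by (auto simp: vt supp_def)
        then have "j \<in> supp d \<or> j \<in> supp t" by (simp add: supp_def)
        then show "j \<in> supp y" using sd st szy by blast
      qed
      then have "v = 0" using kerv[OF Bv] abv u0 by simp
      then have "d = t" using vt by simp
      then have "i \<in> supp z" using di st by (auto simp: supp_def)
      then show False using iz by simp
    qed
    have "dim (insert (0, d) NpE) = dim NpE + 1" using notin by (simp add: dim_insert)
    moreover have "dim (insert (0, d) NpE) \<le> CARD('n1) + CARD('n2)"
      using dim_subset_UNIV[of "insert (0, d) NpE"] by simp
    moreover have "card (supp x') + card (supp z) \<le> dim E" unfolding E_def by (rule dimE)
    ultimately have "card (supp x') + card (supp z) < CARD('n1) + CARD('n2) - dim N" using dsum by linarith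
    then show ?thesis using cnt unfolding R_rank_def N_def by simp
  qed
qed

end
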